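(* Let $\mathrm{Pol}=(\mathrm{Pol}_1,\mathrm{Pol}_2):\mathrm{SL}(2,\mathbb C)\to\mathrm{SL}(2,\mathbb C)^{++}\times\mathrm{SU}(2)$ be the polar decomposition $A=\mathrm{Pol}_1(A)\mathrm{Pol}_2(A)$. For all $A\in\mathrm{SL}(2,\mathbb C)$, $\|d\mathrm{Pol}_2(A)\|\le|A|$.
   Context: $\mathrm{SL}(2,\mathbb C)^{++}$ denotes the Hermitian positive definite elements of $\mathrm{SL}(2,\mathbb C)$. $|\cdot|$ is the Frobenius norm $|A|=(\sum_{i,j}|a_{ij}|^2)^{1/2}$ on $2\times2$ complex matrices (used on tangent spaces of $\mathrm{SL}(2,\mathbb C)$ and $\mathrm{SU}(2)$), and $\|d\mathrm{Pol}_2(A)\|$ is the corresponding operator norm of the differential. *)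

theory Defs
  imports "HOL-Analysis.Analysis"
begin

text \<open>2x2 complex matrices. The norm on complex^2^2 (norm_vec_def, iterated L2 norm of rows)
  is exactly the Frobenius norm.\<close>
type_synonym cmat = "complex^2^2"

definition cmat_adj :: "cmat \<Rightarrow> cmat" where
  "cmat_adj A = (\<chi> i j. cnj (A $ j $ i))"

definition SL2 :: "cmat set" where
  "SL2 = {A. det A = 1}"

definition hermitian_posdef :: "cmat \<Rightarrow> bool" where
  "hermitian_posdef P \<longleftrightarrow> cmat_adj P = P \<and>
     (\<forall>v::complex^2. v \<noteq> 0 \<longrightarrow> 0 < Re (\<Sum>i\<in>UNIV. cnj (v $ i) * (P *v v) $ i))"

definition SL2pp :: "cmat set" where
  "SL2pp = {P. det P = 1 \<and> hermitian_posdef P}"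

definition SU2 :: "cmat set" where
  "SU2 = {U. U ** cmat_adj U = mat 1 \<and> det U = 1}"

definition Pol :: "cmat \<Rightarrow> cmat \<times> cmat" where
  "Pol A = (THE (P, U). P \<in> SL2pp \<and> U \<in> SU2 \<and> A = P ** U)"

definition Pol1 :: "cmat \<Rightarrow> cmat" where "Pol1 A = fst (Pol A)"
definition Pol2 :: "cmat \<Rightarrow> cmat" where "Pol2 A = snd (Pol A)"

definition tangent_SL2 :: "cmat \<Rightarrow> cmat set" where
  "tangent_SL2 A = {X. \<exists>\<gamma>::real \<Rightarrow> cmat. \<gamma> 0 = A \<and> (\<forall>t. \<gamma> t \<in> SL2) \<and>
      (\<gamma> has_vector_derivative X) (at 0)}"

end

theory Submission
  imports Defs
begin

lemma two_ne_one[simp]: "(2::2) \<noteq> 1" "(1::2) \<noteq> 2"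
  by (simp_all add: exhaust_2) 

definition hat :: "cmat \<Rightarrow> cmat" where
  "hat A = (\<chi> i j. if i = 1 then (if j = 1 then cnj (A$2$2) else - cnj (A$2$1))
                     else (if j = 1 then - cnj (A$1$2) else cnj (A$1$1)))"

lemma hat_nth[simp]: "hat A $1$1 = cnj (A$2$2)" "hat A $1$2 = - cnj (A$2$1)"
  "hat A $2$1 = - cnj (A$1$2)" "hat A $2$2 = cnj (A$1$1)"
  by (simp_all add: hat_def)

lemma cmat_eq_iff: "(A::cmat) = B \<longleftrightarrow> A$1$1 = B$1$1 \<and> A$1$2 = B$1$2 \<and> A$2$1 = B$2$1 \<and> A$2$2 = B$2$2"
  by (auto simp add: vec_eq_iff forall_2)

lemma mmult_nth[simp]: "((A::cmat) ** B)$i$j = A$i$1 * B$1$j + A$i$2 * B$2$j"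
  by (simp add: matrix_matrix_mult_def sum_2)

lemma adj_nth[simp]: "cmat_adj A $i$j = cnj (A$j$i)"
  by (simp add: cmat_adj_def)

lemma mat1_nth[simp]: "(mat 1 :: cmat) $1$1 = 1" "(mat 1 :: cmat) $1$2 = 0" "(mat 1 :: cmat) $2$1 = 0" "(mat 1 :: cmat) $2$2 = 1"
  by (simp_all add: mat_def)

lemma det2: "det (A::cmat) = A$1$1 * A$2$2 - A$1$2 * A$2$1"
  by (rule det_2)

lemma inner_cmat: "inner (A::cmat) B = inner (A$1$1) (B$1$1) + inner (A$1$2) (B$1$2) + inner (A$2$1) (B$2$1) + inner (A$2$2) (B$2$2)"
  by (simp add: inner_vec_def sum_2)

lemma norm_cmat_sq: "(norm (A::cmat))^2 = (cmod (A$1$1))^2 + (cmod (A$1$2))^2 + (cmod (A$2$1))^2 + (cmod (A$2$2))^2"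
  by (simp add: power2_norm_eq_inner inner_cmat)

lemma scaleR_cpx[simp]: "(r::real) *\<^sub>R (z::complex) = of_real r * z"
  by (simp add: scaleR_conv_of_real)

lemma scaleR_nth[simp]: "((r::real) *\<^sub>R (A::cmat))$i$j = of_real r * A$i$j"
  by (simp only: vector_scaleR_component) (simp add: scaleR_conv_of_real)

lemma nsq_complex: "complex_of_real ((norm (A::cmat))^2) = A$1$1 * cnj (A$1$1) + A$1$2 * cnj (A$1$2) + A$2$1 * cnj (A$2$1) + A$2$2 * cnj (A$2$2)"
  unfolding norm_cmat_sq of_real_add complex_norm_square by (rule refl)

lemma det_cnj: "det (A::cmat) = 1 \<Longrightarrow> cnj (A$1$1) * cnj (A$2$2) - cnj (A$1$2) * cnj (A$2$1) = 1"
  by (metis complex_cnj_diff complex_cnj_mult complex_cnj_one det2)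

lemma key1:
  assumes "det (A::cmat) = 1"
  shows "(A ** cmat_adj A + mat 1) ** (A + hat A) = ((norm A)^2 + 2) *\<^sub>R A"
proof -
  have d: "A$1$1 * A$2$2 - A$1$2 * A$2$1 = 1" using assms by (simp add: det2)
  have d': "cnj (A$1$1) * cnj (A$2$2) - cnj (A$1$2) * cnj (A$2$1) = 1" using det_cnj[OF assms] .
  have n: "complex_of_real ((norm A)^2 + 2) = A$1$1 * cnj (A$1$1) + A$1$2 * cnj (A$1$2) + A$2$1 * cnj (A$2$1) + A$2$2 * cnj (A$2$2) + 2"
    using nsq_complex[of A] by simp
  show ?thesis unfolding cmat_eq_iff scaleR_nth n
    using d d' by (simp add: mat_def) algebra
qed

definition sA :: "cmat \<Rightarrow> real" where "sA A = sqrt ((norm A)^2 + 2)"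
definition FP :: "cmat \<Rightarrow> cmat" where "FP A = inverse (sA A) *\<^sub>R (A ** cmat_adj A + mat 1)"
definition FU :: "cmat \<Rightarrow> cmat" where "FU A = inverse (sA A) *\<^sub>R (A + hat A)"

lemma sA_pos: "sA A > 0" unfolding sA_def by (simp add: add_nonneg_pos)
lemma sA_sq: "(sA A)^2 = (norm A)^2 + 2" unfolding sA_def by (rule real_sqrt_pow2) simp
lemma sA_sq_c: "complex_of_real (inverse (sA A)) * complex_of_real (inverse (sA A)) * complex_of_real ((norm A)^2 + 2) = 1"
proof -
  have e: "(norm A)^2+2 = sA A * sA A" by (metis sA_sq power2_eq_square)
  have "inverse (sA A) * inverse (sA A) * ((norm A)^2 + 2) = 1"
    unfolding e using sA_pos[of A] by (simp add: field_simps)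
  then show ?thesis by (metis of_real_1 of_real_mult)
qed

lemma sA_sq_c2: "inverse (complex_of_real (sA A)) * inverse (complex_of_real (sA A)) *
     ((complex_of_real (norm A))^2 + 2) = 1"
  using sA_sq_c[of A] by simp

lemma key2:
  assumes "det (A::cmat) = 1"
  shows "(A + hat A) ** cmat_adj (A + hat A) = ((norm A)^2 + 2) *\<^sub>R mat 1"
proof -
  have d: "A$1$1 * A$2$2 - A$1$2 * A$2$1 = 1" using assms by (simp add: det2)
  have d': "cnj (A$1$1) * cnj (A$2$2) - cnj (A$1$2) * cnj (A$2$1) = 1" using det_cnj[OF assms] .
  have n: "complex_of_real ((norm A)^2 + 2) = A$1$1 * cnj (A$1$1) + A$1$2 * cnj (A$1$2) + A$2$1 * cnj (A$2$1) + A$2$2 * cnj (A$2$2) + 2"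
    using nsq_complex[of A] by simp
  show ?thesis unfolding cmat_eq_iff scaleR_nth n
    using d d' by simp algebra
qed

lemma key3:
  assumes "det (A::cmat) = 1"
  shows "det (A + hat A) = complex_of_real ((norm A)^2 + 2)"
proof -
  have d: "A$1$1 * A$2$2 - A$1$2 * A$2$1 = 1" using assms by (simp add: det2)
  have d': "cnj (A$1$1) * cnj (A$2$2) - cnj (A$1$2) * cnj (A$2$1) = 1" using det_cnj[OF assms] .
  have n: "complex_of_real ((norm A)^2 + 2) = A$1$1 * cnj (A$1$1) + A$1$2 * cnj (A$1$2) + A$2$1 * cnj (A$2$1) + A$2$2 * cnj (A$2$2) + 2"
    using nsq_complex[of A] by simp
  show ?thesis unfolding det2 n
    using d d' by simp algebra
qed

lemma key4:
  assumes "det (A::cmat) = 1"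
  shows "det (A ** cmat_adj A + mat 1) = complex_of_real ((norm A)^2 + 2)"
proof -
  have d: "A$1$1 * A$2$2 - A$1$2 * A$2$1 = 1" using assms by (simp add: det2)
  have d': "cnj (A$1$1) * cnj (A$2$2) - cnj (A$1$2) * cnj (A$2$1) = 1" using det_cnj[OF assms] .
  have n: "complex_of_real ((norm A)^2 + 2) = A$1$1 * cnj (A$1$1) + A$1$2 * cnj (A$1$2) + A$2$1 * cnj (A$2$1) + A$2$2 * cnj (A$2$2) + 2"
    using nsq_complex[of A] by simp
  show ?thesis unfolding det2 n
    using d d' by simp algebra
qed

lemma det_scaleR: "det (r *\<^sub>R (M::cmat)) = of_real r * of_real r * det M"
  unfolding det2 by (simp add: algebra_simps)

lemma mult_scaleR2: "(r *\<^sub>R (M::cmat)) ** (q *\<^sub>R (N::cmat)) = (r * q) *\<^sub>R (M ** N)"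
  unfolding cmat_eq_iff by (simp add: algebra_simps)

lemma adj_scaleR: "cmat_adj (r *\<^sub>R (M::cmat)) = r *\<^sub>R cmat_adj M"
  unfolding cmat_eq_iff by simp

lemma adj_mult: "cmat_adj ((M::cmat) ** (N::cmat)) = cmat_adj N ** cmat_adj M"
  unfolding cmat_eq_iff by (simp add: algebra_simps)

lemma FP_FU: "det A = 1 \<Longrightarrow> FP A ** FU A = A"
  unfolding FP_def FU_def mult_scaleR2
  by (simp add: key1) (simp add: cmat_eq_iff sA_sq_c2)

lemma FU_SU2: "det A = 1 \<Longrightarrow> FU A \<in> SU2"
  unfolding SU2_def FU_def
  apply (simp add: adj_scaleR mult_scaleR2 key2 det_scaleR key3)
  apply (simp add: cmat_eq_iff sA_sq_c2)
  done

lemma mv_nth[simp]: "((M::cmat) *v (v::complex^2))$i = M$i$1 * v$1 + M$i$2 * v$2"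
  by (simp add: matrix_vector_mult_def sum_2)

lemma vec2_nz: "(v::complex^2) \<noteq> 0 \<Longrightarrow> v$1 \<noteq> 0 \<or> v$2 \<noteq> 0"
  by (auto simp add: vec_eq_iff forall_2)

lemma Re_cnj_mult: "Re (cnj w * w) = (cmod w)^2"
  by (simp add: complex_norm_square[symmetric] mult.commute)

lemma Re_ofr_mult: "Re (complex_of_real r * z) = r * Re z" by simp

lemma FP_SL2pp: "det A = 1 \<Longrightarrow> FP A \<in> SL2pp"
proof -
  assume dA: "det A = 1"
  have det: "det (FP A) = 1"
    unfolding FP_def det_scaleR key4[OF dA] using sA_sq_c[of A] by simp
  have herm: "cmat_adj (FP A) = FP A"
    unfolding FP_def adj_scaleR cmat_eq_iff by (simp add: mult.commute)
  have pos: "0 < Re (\<Sum>i\<in>UNIV. cnj (v $ i) * (FP A *v v) $ i)" if "v \<noteq> 0" for v :: "complex^2"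
  proof -
    define w1 where "w1 = cnj (A$1$1) * v$1 + cnj (A$2$1) * v$2"
    define w2 where "w2 = cnj (A$1$2) * v$1 + cnj (A$2$2) * v$2"
    have "(\<Sum>i\<in>UNIV. cnj (v $ i) * (FP A *v v) $ i) =
       of_real (inverse (sA A)) * (cnj w1 * w1 + cnj w2 * w2 + cnj (v$1) * v$1 + cnj (v$2) * v$2)"
      unfolding sum_2 FP_def w1_def w2_def by simp algebra
    then have "Re (\<Sum>i\<in>UNIV. cnj (v $ i) * (FP A *v v) $ i) =
       inverse (sA A) * ((cmod w1)^2 + (cmod w2)^2 + (cmod (v$1))^2 + (cmod (v$2))^2)"
      by (simp only: Re_ofr_mult plus_complex.sel Re_cnj_mult)
    moreover have "(cmod (v$1))^2 + (cmod (v$2))^2 > 0"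
      using vec2_nz[OF that] by (auto simp add: add_pos_nonneg add_nonneg_pos)
    then have "(cmod w1)^2 + (cmod w2)^2 + (cmod (v$1))^2 + (cmod (v$2))^2 > 0"
      by (smt (verit) zero_le_power2)
    ultimately show ?thesis using sA_pos[of A]
      by (metis inverse_positive_iff_positive mult_pos_pos)
  qed
  show ?thesis unfolding SL2pp_def hermitian_posdef_def using det herm pos by blast
qed

lemma adjP: "det (P::cmat) = 1 \<Longrightarrow> (\<chi> i j. if i = 1 then (if j = 1 then P$2$2 else - P$1$2)
                     else (if j = 1 then - P$2$1 else P$1$1)) ** P = mat 1"
  unfolding cmat_eq_iff det2 by (simp add: algebra_simps)

lemma uniq:
  assumes P: "P \<in> SL2pp" and U: "U \<in> SU2" and A: "A = P ** U"
  shows "P = FP A \<and> U = FU A"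
proof -
  have dP: "det P = 1" and hP: "cmat_adj P = P"
    and pP: "\<And>v::complex^2. v \<noteq> 0 \<Longrightarrow> 0 < Re (\<Sum>i\<in>UNIV. cnj (v $ i) * (P *v v) $ i)"
    using P unfolding SL2pp_def hermitian_posdef_def by auto
  have uU: "U ** cmat_adj U = mat 1" and dU: "det U = 1" using U unfolding SU2_def by auto
  have dA: "det A = 1" using A dP dU by (simp add: det_mul)
  have H: "A ** cmat_adj A = P ** P"
    proof -
    have "A ** cmat_adj A = P ** (U ** cmat_adj U) ** P" unfolding A adj_mult hP by (simp add: matrix_mul_assoc)
    then show ?thesis unfolding uU matrix_mul_rid .
  qed
  define e1 :: "complex^2" where "e1 = (\<chi> i. if i = 1 then 1 else 0)"
  define e2 :: "complex^2" where "e2 = (\<chi> i. if i = 1 then 0 else 1)"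
  have "e1 $ 1 \<noteq> 0" unfolding e1_def by simp
  then have "e1 \<noteq> 0" by auto
  then have p11: "0 < Re (P$1$1)" using pP[of e1] unfolding e1_def by (simp add: sum_2)
  have "e2 $ 2 \<noteq> 0" unfolding e2_def by simp
  then have "e2 \<noteq> 0" by auto
  then have p22: "0 < Re (P$2$2)" using pP[of e2] unfolding e2_def by (simp add: sum_2)
  have "cnj (P$1$1) = P$1$1" using arg_cong[OF hP, of "\<lambda>M. M$1$1"] by simp
  then have i11: "Im (P$1$1) = 0" by (simp add: complex_eq_iff)
  have "cnj (P$2$2) = P$2$2" using arg_cong[OF hP, of "\<lambda>M. M$2$2"] by simp
  then have i22: "Im (P$2$2) = 0" by (simp add: complex_eq_iff)
  define t where "t = Re (P$1$1) + Re (P$2$2)"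
  have tpos: "t > 0" unfolding t_def using p11 p22 by simp
  have tr: "P$1$1 + P$2$2 = of_real t" unfolding t_def using i11 i22 by (simp add: complex_eq_iff)
  have CH: "P ** P + mat 1 = t *\<^sub>R P"
  proof -
    have d: "P$1$1 * P$2$2 - P$1$2 * P$2$1 = 1" using dP by (simp add: det2)
    show ?thesis unfolding cmat_eq_iff mmult_nth scaleR_nth vector_add_component tr[symmetric] mat1_nth
      using d by algebra
  qed
  have "complex_of_real ((norm A)^2 + 2) = (A ** cmat_adj A + mat 1)$1$1 + (A ** cmat_adj A + mat 1)$2$2"
    using nsq_complex[of A] by (simp add: algebra_simps)
  also have "\<dots> = of_real t * (P$1$1 + P$2$2)" unfolding H CH by (simp add: algebra_simps)
  also have "\<dots> = of_real (t * t)" using tr by simp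
  finally have "(norm A)^2 + 2 = t * t" using of_real_eq_iff by blast
  then have ts: "t = sA A" unfolding sA_def using tpos by (simp add: power2_eq_square[symmetric])
  have PF: "P = FP A" unfolding FP_def H CH ts using sA_pos[of A] by simp
  define Q :: cmat where "Q = (\<chi> i j. if i = 1 then (if j = 1 then P$2$2 else - P$1$2)
                     else (if j = 1 then - P$2$1 else P$1$1))"
  have QP: "Q ** P = mat 1" unfolding Q_def using adjP[OF dP] .
  have "P ** FU A = A" using FP_FU[OF dA] PF by simp
  then have "P ** U = P ** FU A" using A by simp
  then have "Q ** (P ** U) = Q ** (P ** FU A)" by simp
  then have "(Q ** P) ** U = (Q ** P) ** FU A" by (simp add: matrix_mul_assoc)
  then have "U = FU A" unfolding QP matrix_mul_lid .
  with PF show ?thesis by simp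
qed

lemma Pol_eq:
  assumes dA: "det A = 1"
  shows "Pol A = (FP A, FU A)"
proof -
  have ex: "FP A \<in> SL2pp \<and> FU A \<in> SU2 \<and> A = FP A ** FU A"
    using FP_SL2pp[OF dA] FU_SU2[OF dA] FP_FU[OF dA] by simp
  have un: "x = (FP A, FU A)" if "(\<lambda>(P, U). P \<in> SL2pp \<and> U \<in> SU2 \<and> A = P ** U) x" for x
  proof (cases x)
    case (Pair P U)
    then have "P \<in> SL2pp" "U \<in> SU2" "A = P ** U" using that by auto
    then have "P = FP A \<and> U = FU A" by (rule uniq)
    then show ?thesis using Pair by simp
  qed
  show ?thesis unfolding Pol_def
    by (rule the_equality) (use ex un in auto)
qed

lemma Pol2_eq: "A \<in> SL2 \<Longrightarrow> Pol2 A = FU A"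
  unfolding Pol2_def SL2_def using Pol_eq by simp

lemma hat_add: "hat (X + Y) = hat X + hat Y" unfolding cmat_eq_iff by simp
lemma hat_scaleR: "hat (r *\<^sub>R X) = r *\<^sub>R hat X" unfolding cmat_eq_iff by simp
lemma norm_hat: "norm (hat X) = norm X"
proof -
  have "(norm (hat X))^2 = (norm X)^2" unfolding norm_cmat_sq by simp
  then show ?thesis by simp
qed
lemma bl_hat: "bounded_linear hat"
  by (rule bounded_linear_intro[where K=1]) (auto simp: hat_add hat_scaleR norm_hat)

lemma sA_alt: "sA A = sqrt (inner A A + 2)" unfolding sA_def by (simp add: power2_norm_eq_inner)

lemma f_deriv: "((\<lambda>A. inverse (sA A)) has_derivative (\<lambda>X. - (inner A X / (sA A)^3))) (at A)"
proof -
  have 1: "((\<lambda>x::cmat. inner x x + 2) has_derivative (\<lambda>h. inner h A + inner A h)) (at A)"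
    by (auto intro!: derivative_eq_intros)
  have 2: "((\<lambda>x. sqrt (inner x x + 2)) has_derivative (\<lambda>h. (inner h A + inner A h) * (inverse (sqrt (inner A A + 2)) / 2))) (at A)"
    by (rule DERIV_compose_FDERIV[OF DERIV_real_sqrt 1]) (simp add: add_nonneg_pos)
  have pos: "sqrt (inner A A + 2) > 0" using inner_ge_zero[of A] by (intro real_sqrt_gt_zero) linarith
  have 3: "((\<lambda>x. inverse (sqrt (inner x x + 2))) has_derivative
     (\<lambda>h. - (inverse (sqrt (inner A A + 2)) * ((inner h A + inner A h) * (inverse (sqrt (inner A A + 2)) / 2)) * inverse (sqrt (inner A A + 2))))) (at A)"
    by (rule Deriv.has_derivative_inverse[OF _ 2]) (metis pos less_irrefl)
  have e: "(\<lambda>h. - (inverse (sqrt (inner A A + 2)) * ((inner h A + inner A h) * (inverse (sqrt (inner A A + 2)) / 2)) * inverse (sqrt (inner A A + 2))))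
     = (\<lambda>X. - (inner A X / (sA A)^3))"
  proof
    fix h
    have p: "sA A > 0" by (rule sA_pos)
    show "- (inverse (sqrt (inner A A + 2)) * ((inner h A + inner A h) * (inverse (sqrt (inner A A + 2)) / 2)) * inverse (sqrt (inner A A + 2))) = - (inner A h / (sA A)^3)"
      unfolding sA_alt[symmetric] using p by (simp add: inner_commute field_simps power3_eq_cube)
  qed
  have 4: "((\<lambda>x. inverse (sqrt (inner x x + 2))) has_derivative (\<lambda>X. - (inner A X / (sA A)^3))) (at A)"
    using 3 unfolding e .
  show ?thesis using 4 unfolding sA_alt[symmetric] .
qed

definition dFU :: "cmat \<Rightarrow> cmat \<Rightarrow> cmat" where
  "dFU A X = inverse (sA A) *\<^sub>R (X + hat X) + (- (inner A X / (sA A)^3)) *\<^sub>R (A + hat A)"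

lemma FU_deriv: "(FU has_derivative dFU A) (at A)"
proof -
  have g: "((\<lambda>A. A + hat A) has_derivative (\<lambda>h. h + hat h)) (at A)"
    by (intro has_derivative_add has_derivative_ident bounded_linear.has_derivative[OF bl_hat])
  have "((\<lambda>A. inverse (sA A) *\<^sub>R (A + hat A)) has_derivative
     (\<lambda>h. inverse (sA A) *\<^sub>R (h + hat h) + (- (inner A h / (sA A)^3)) *\<^sub>R (A + hat A))) (at A)"
    by (rule has_derivative_scaleR[OF f_deriv g])
  then show ?thesis unfolding FU_def[abs_def] dFU_def[abs_def] .
qed

lemma inner_X_hatA: "inner X (hat A) = Re (X$1$1 * A$2$2 + A$1$1 * X$2$2 - X$1$2 * A$2$1 - A$1$2 * X$2$1)"
  by (simp add: inner_cmat inner_complex_def algebra_simps)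
lemma inner_hatX_A: "inner (hat X) A = inner X (hat A)"
  by (simp add: inner_cmat inner_complex_def algebra_simps)
lemma inner_hat_hat: "inner (hat X) (hat A) = inner X A"
  by (simp add: inner_cmat inner_complex_def algebra_simps)
lemma inner_A_hatA: "inner A (hat A) = 2 * Re (det A)"
  by (simp add: inner_cmat inner_complex_def algebra_simps det2)

lemma hat_hat[simp]: "hat (hat X) = X" unfolding cmat_eq_iff by simp

lemma bound:
  assumes dA: "det A = 1"
    and D: "X$1$1 * A$2$2 + A$1$1 * X$2$2 - X$1$2 * A$2$1 - A$1$2 * X$2$1 = 0"
  shows "norm (dFU A X) \<le> norm A * norm X"
proof -
  define s where "s = sA A"
  define n where "n = (norm A)^2"
  define r where "r = inner A X"
  define u where "u = X + hat X"
  define v where "v = A + hat A"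
  have sp: "s > 0" unfolding s_def by (rule sA_pos)
  have ss: "s^2 = n + 2" unfolding s_def n_def by (rule sA_sq)
  have xha: "inner X (hat A) = 0" using D by (simp add: inner_X_hatA)
  have uv: "inner u v = 2 * r"
    unfolding u_def v_def r_def
    by (simp add: inner_add_left inner_add_right inner_hatX_A inner_hat_hat xha) (simp add: inner_commute)
  have aha: "inner A (hat A) = 2" using dA by (simp add: inner_A_hatA)
  have vv: "inner v v = 2 * n + 4"
    unfolding v_def n_def
    by (simp add: inner_add_left inner_add_right inner_hatX_A inner_hat_hat aha power2_norm_eq_inner)
  have xhx: "inner X (hat X) \<le> (norm X)^2"
    using norm_cauchy_schwarz[of X "hat X"] by (simp add: norm_hat power2_eq_square)
  have uu: "inner u u \<le> 4 * (norm X)^2"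
    unfolding u_def
    using xhx by (simp add: inner_add_left inner_add_right inner_hatX_A inner_hat_hat power2_norm_eq_inner)
  have n2: "n \<ge> 2"
    using norm_cauchy_schwarz[of A "hat A"] aha unfolding n_def by (simp add: norm_hat power2_eq_square)
  have dF: "dFU A X = (1 / s) *\<^sub>R u - (r / s^3) *\<^sub>R v"
    unfolding dFU_def s_def r_def u_def v_def by (simp add: divide_inverse)
  have N: "(norm (dFU A X))^2 = inner u u / s^2 - 2 * (1/s) * (r / s^3) * inner u v + (r/s^3)^2 * inner v v"
    unfolding dF power2_norm_eq_inner
    by (simp add: inner_diff_left inner_diff_right inner_commute[of v u] power2_eq_square algebra_simps)
  also have "\<dots> = inner u u / s^2 - 2 * r^2 / s^4"
  proof -
    have vv': "inner v v = 2 * s^2" using vv ss by simp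
    show ?thesis unfolding uv vv' using sp
      by (simp add: field_simps power2_eq_square power3_eq_cube power4_eq_xxxx)
  qed
  also have "\<dots> \<le> inner u u / s^2" by simp
  also have "\<dots> \<le> 4 * (norm X)^2 / s^2" using uu sp by (simp add: divide_right_mono)
  also have "\<dots> \<le> n * (norm X)^2"
  proof -
    have "2 * 4 \<le> n * (n + 2)" using n2 by (intro mult_mono) auto
    then have "4 \<le> n * s^2" unfolding ss by linarith
    then have "4 / s^2 \<le> n" using sp by (simp add: divide_le_eq)
    then show ?thesis using mult_right_mono[OF \<open>4 / s^2 \<le> n\<close>, of "(norm X)^2"] by simp
  qed
  also have "\<dots> = (norm A * norm X)^2" unfolding n_def by (simp add: power_mult_distrib)
  finally show ?thesis by (rule power2_le_imp_le) simp
qed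

lemma comp_deriv:
  fixes i j :: 2 and \<gamma> :: "real \<Rightarrow> cmat"
  assumes "(\<gamma> has_derivative (\<lambda>h. h *\<^sub>R X)) (at (0::real))"
  shows "((\<lambda>t. \<gamma> t $ i $ j) has_derivative (\<lambda>h. h *\<^sub>R (X $ i $ j))) (at 0)"
proof -
  have bl: "bounded_linear (\<lambda>M::cmat. M $ i $ j)"
    using bounded_linear_compose[OF bounded_linear_vec_nth[of j] bounded_linear_vec_nth[of i]] by simp
  show ?thesis using bounded_linear.has_derivative[OF bl assms] by simp
qed

lemma tangent_D:
  assumes "X \<in> tangent_SL2 A"
  shows "X$1$1 * A$2$2 + A$1$1 * X$2$2 - X$1$2 * A$2$1 - A$1$2 * X$2$1 = 0"
proof -
  obtain \<gamma> :: "real \<Rightarrow> cmat" where g0: "\<gamma> 0 = A" and gS: "\<forall>t. \<gamma> t \<in> SL2"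
    and gd: "(\<gamma> has_vector_derivative X) (at 0)"
    using assms unfolding tangent_SL2_def by blast
  have gd': "(\<gamma> has_derivative (\<lambda>h. h *\<^sub>R X)) (at 0)" using gd unfolding has_vector_derivative_def .
  note c = comp_deriv[OF gd']
  have "((\<lambda>t. \<gamma> t $1$1 * \<gamma> t $2$2 - \<gamma> t $1$2 * \<gamma> t $2$1) has_derivative
    (\<lambda>h. (\<gamma> 0 $1$1 * (h *\<^sub>R X$2$2) + (h *\<^sub>R X$1$1) * \<gamma> 0 $2$2)
        - (\<gamma> 0 $1$2 * (h *\<^sub>R X$2$1) + (h *\<^sub>R X$1$2) * \<gamma> 0 $2$1))) (at 0)"
    by (intro has_derivative_diff has_derivative_mult c)
  moreover have "(\<lambda>t. \<gamma> t $1$1 * \<gamma> t $2$2 - \<gamma> t $1$2 * \<gamma> t $2$1) = (\<lambda>t. 1)"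
    using gS unfolding SL2_def by (simp add: det2)
  ultimately have "((\<lambda>t. 1::complex) has_derivative
    (\<lambda>h. (\<gamma> 0 $1$1 * (h *\<^sub>R X$2$2) + (h *\<^sub>R X$1$1) * \<gamma> 0 $2$2)
        - (\<gamma> 0 $1$2 * (h *\<^sub>R X$2$1) + (h *\<^sub>R X$1$2) * \<gamma> 0 $2$1))) (at 0)" by simp
  from has_derivative_unique[OF this has_derivative_const]
  have "(\<lambda>h::real. (\<gamma> 0 $1$1 * (h *\<^sub>R X$2$2) + (h *\<^sub>R X$1$1) * \<gamma> 0 $2$2)
        - (\<gamma> 0 $1$2 * (h *\<^sub>R X$2$1) + (h *\<^sub>R X$1$2) * \<gamma> 0 $2$1)) = (\<lambda>h. 0)" .
  from fun_cong[OF this, of 1] show ?thesis unfolding g0 by (simp add: algebra_simps)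
qed

theorem proposition13:
  fixes A :: cmat
  assumes "A \<in> SL2"
  shows "Pol2 differentiable (at A within SL2) \<and>
    (\<forall>L. (Pol2 has_derivative L) (at A within SL2) \<longrightarrow>
       (\<forall>X\<in>tangent_SL2 A. norm (L X) \<le> norm A * norm X))"
proof
  have eq: "\<And>x. x \<in> SL2 \<Longrightarrow> Pol2 x = FU x" by (rule Pol2_eq)
  have "(FU has_derivative dFU A) (at A within SL2)"
    using FU_deriv has_derivative_at_withinI by blast
  then have "(Pol2 has_derivative dFU A) (at A within SL2)"
    using has_derivative_transform[of A SL2 Pol2 FU "dFU A"] assms eq by blast
  then show "Pol2 differentiable (at A within SL2)" unfolding differentiable_def by blast
next
  have dA: "det A = 1" using assms unfolding SL2_def by simp
  show "\<forall>L. (Pol2 has_derivative L) (at A within SL2) \<longrightarrow>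
       (\<forall>X\<in>tangent_SL2 A. norm (L X) \<le> norm A * norm X)"
  proof (intro allI impI ballI)
    fix L X
    assume L: "(Pol2 has_derivative L) (at A within SL2)" and X: "X \<in> tangent_SL2 A"
    obtain \<gamma> :: "real \<Rightarrow> cmat" where g0: "\<gamma> 0 = A" and gS: "\<forall>t. \<gamma> t \<in> SL2"
      and gd: "(\<gamma> has_vector_derivative X) (at 0)"
      using X unfolding tangent_SL2_def by blast
    have gd': "(\<gamma> has_derivative (\<lambda>h. h *\<^sub>R X)) (at 0)" using gd unfolding has_vector_derivative_def .
    have rg: "\<gamma> ` UNIV \<subseteq> SL2" using gS by auto
    have L': "(Pol2 has_derivative L) (at (\<gamma> 0) within \<gamma> ` UNIV)"
      using has_derivative_subset[OF L rg] g0 by simp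
    have c1: "((Pol2 \<circ> \<gamma>) has_derivative (L \<circ> (\<lambda>h. h *\<^sub>R X))) (at 0)"
      by (rule diff_chain_within[OF gd' L'])
    have F': "(FU has_derivative dFU A) (at (\<gamma> 0) within \<gamma> ` UNIV)"
      using FU_deriv has_derivative_at_withinI g0 by metis
    have c2: "((FU \<circ> \<gamma>) has_derivative (dFU A \<circ> (\<lambda>h. h *\<^sub>R X))) (at 0)"
      by (rule diff_chain_within[OF gd' F'])
    have "Pol2 \<circ> \<gamma> = FU \<circ> \<gamma>" using gS Pol2_eq by (simp add: fun_eq_iff)
    with c1 have c1': "((FU \<circ> \<gamma>) has_derivative (L \<circ> (\<lambda>h. h *\<^sub>R X))) (at 0)" by simp
    have "L \<circ> (\<lambda>h. h *\<^sub>R X) = dFU A \<circ> (\<lambda>h. h *\<^sub>R X)"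
      by (rule has_derivative_unique[OF c1' c2])
    from fun_cong[OF this, of 1] have "L X = dFU A X" by simp
    then show "norm (L X) \<le> norm A * norm X"
      using bound[OF dA tangent_D[OF X]] by simp
  qed
qed

end
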